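(* Let $E$ be a contact Riemannian Lie algebroid with associated almost contact Riemannian structure $(F_E,\xi,\eta,g_E)$ and Levi-Civita connection $\nabla$ of $g_E$. Then $E$ is $K$-contact (i.e. $\xi$ is a Killing section) if and only if $\nabla_s\xi=-F_E(s)$ for every $s\in\Gamma(E)$.
   Context: A Lie algebroid $(E,\rho_E,[\cdot,\cdot]_E)$ over $M$ is a vector bundle with anchor $\rho_E:E\to TM$ and Lie bracket on $\Gamma(E)$ with $[s_1,fs_2]_E=f[s_1,s_2]_E+\rho_E(s_1)(f)s_2$. For a 1-form $\eta$, $(d_E\eta)(s_1,s_2)=\frac12\{\rho_E(s_1)(\eta(s_2))-\rho_E(s_2)(\eta(s_1))-\eta([s_1,s_2]_E)\}$. For $E$ of rank $2m+1$, an almost contact Riemannian structure $(F_E,\xi,\eta,g_E)$: endomorphism $F_E$, $\xi\in\Gamma(E)$, $\eta\in\Gamma(E^* )$, bundle metric $g_E$ with $F_E^2=-I_E+\eta\otimes\xi$, $\eta(\xi)=1$, $g_E(F_Es_1,F_Es_2)=g_E(s_1,s_2)-\eta(s_1)\eta(s_2)$; fundamental form $\Omega_E(s_1,s_2)=g_E(s_1,F_Es_2)$. $E$ is contact Riemannian if also $\eta\wedge(d_E\eta)^m$ vanishes nowhere and $d_E\eta=\Omega_E$. $\xi$ is Killing if $\rho_E(\xi)(g_E(s_1,s_2))-g_E([\xi,s_1]_E,s_2)-g_E(s_1,[\xi,s_2]_E)=0$ for all $s_1,s_2$; a contact Riemannian Lie algebroid with Killing $\xi$ is called $K$-contact. The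 Levi-Civita connection $\nabla$ is the unique $E$-connection ($\nabla_{fs}s'=f\nabla_ss'$, $\nabla_s(fs')=f\nabla_ss'+\rho_E(s)(f)s'$) that is torsion-free ($\nabla_{s_1}s_2-\nabla_{s_2}s_1=[s_1,s_2]_E$) and metric ($\rho_E(s)(g_E(s_1,s_2))=g_E(\nabla_ss_1,s_2)+g_E(s_1,\nabla_ss_2)$). *)

theory Defs
  imports "HOL-Analysis.Analysis"
begin

text \<open>
M is (the points of) a type 'm; A is the algebra of smooth functions on M.
E is a real vector bundle of rank r whose fibre over x is the linear subspace E x of
a finite dimensional real vector space 'v (every vector bundle embeds in a trivial one).
\<close>

definition fsmul :: "('m \<Rightarrow> real) \<Rightarrow> ('m \<Rightarrow> 'v::real_vector) \<Rightarrow> ('m \<Rightarrow> 'v)" where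
  "fsmul f s = (\<lambda>x. f x *\<^sub>R s x)"

definition sadd :: "('m \<Rightarrow> 'v::real_vector) \<Rightarrow> ('m \<Rightarrow> 'v) \<Rightarrow> ('m \<Rightarrow> 'v)" where
  "sadd s1 s2 = (\<lambda>x. s1 x + s2 x)"

definition smooth_function_algebra :: "('m \<Rightarrow> real) set \<Rightarrow> bool" where
  "smooth_function_algebra A \<longleftrightarrow>
     (\<forall>c. (\<lambda>x. c) \<in> A) \<and>
     (\<forall>f\<in>A. \<forall>h\<in>A. (\<lambda>x. f x + h x) \<in> A \<and> (\<lambda>x. f x * h x) \<in> A)"

definition vector_bundle ::
  "('m \<Rightarrow> real) set \<Rightarrow> nat \<Rightarrow> ('m \<Rightarrow> 'v::euclidean_space set) \<Rightarrow> ('m \<Rightarrow> 'v) set \<Rightarrow> bool" where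
  "vector_bundle A r E Gam \<longleftrightarrow>
     smooth_function_algebra A \<and>
     (\<forall>x. subspace (E x) \<and> dim (E x) = r) \<and>
     (\<forall>s\<in>Gam. \<forall>x. s x \<in> E x) \<and>
     (\<lambda>x. 0) \<in> Gam \<and>
     (\<forall>s1\<in>Gam. \<forall>s2\<in>Gam. sadd s1 s2 \<in> Gam) \<and>
     (\<forall>f\<in>A. \<forall>s\<in>Gam. fsmul f s \<in> Gam) \<and>
     (\<forall>x v. v \<in> E x \<longrightarrow> (\<exists>s\<in>Gam. s x = v))"

text \<open>Lie algebroid: anchor rho (rho s acts on functions as the vector field rho_E(s)) and bracket br.\<close>
definition lie_algebroid ::
  "('m \<Rightarrow> real) set \<Rightarrow> nat \<Rightarrow> ('m \<Rightarrow> 'v::euclidean_space set) \<Rightarrow> ('m \<Rightarrow> 'v) set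
   \<Rightarrow> (('m \<Rightarrow> 'v) \<Rightarrow> ('m \<Rightarrow> real) \<Rightarrow> ('m \<Rightarrow> real))
   \<Rightarrow> (('m \<Rightarrow> 'v) \<Rightarrow> ('m \<Rightarrow> 'v) \<Rightarrow> ('m \<Rightarrow> 'v)) \<Rightarrow> bool" where
  "lie_algebroid A r E Gam rho br \<longleftrightarrow>
     vector_bundle A r E Gam \<and>
     \<comment> \<open>rho(s) is a vector field: an R-linear derivation of the smooth functions\<close>
     (\<forall>s\<in>Gam. \<forall>f\<in>A. rho s f \<in> A) \<and>
     (\<forall>s\<in>Gam. \<forall>f\<in>A. \<forall>h\<in>A. \<forall>c::real.
        rho s (\<lambda>x. f x + h x) = (\<lambda>x. rho s f x + rho s h x) \<and>
        rho s (\<lambda>x. c * f x) = (\<lambda>x. c * rho s f x) \<and>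
        rho s (\<lambda>x. f x * h x) = (\<lambda>x. f x * rho s h x + h x * rho s f x)) \<and>
     \<comment> \<open>rho is a bundle map, i.e. C-infinity(M)-linear on sections\<close>
     (\<forall>s1\<in>Gam. \<forall>s2\<in>Gam. \<forall>h\<in>A. rho (sadd s1 s2) h = (\<lambda>x. rho s1 h x + rho s2 h x)) \<and>
     (\<forall>f\<in>A. \<forall>s\<in>Gam. \<forall>h\<in>A. rho (fsmul f s) h = (\<lambda>x. f x * rho s h x)) \<and>
     \<comment> \<open>Lie bracket on sections\<close>
     (\<forall>s1\<in>Gam. \<forall>s2\<in>Gam. br s1 s2 \<in> Gam) \<and>
     (\<forall>s1\<in>Gam. \<forall>s2\<in>Gam. \<forall>s3\<in>Gam. \<forall>c::real.
        br (sadd s1 s2) s3 = sadd (br s1 s3) (br s2 s3) \<and>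
        br (fsmul (\<lambda>x. c) s1) s2 = fsmul (\<lambda>x. c) (br s1 s2)) \<and>
     (\<forall>s1\<in>Gam. \<forall>s2\<in>Gam. br s1 s2 = fsmul (\<lambda>x. -1) (br s2 s1)) \<and>
     (\<forall>s1\<in>Gam. \<forall>s2\<in>Gam. \<forall>s3\<in>Gam.
        sadd (br s1 (br s2 s3)) (sadd (br s2 (br s3 s1)) (br s3 (br s1 s2))) = (\<lambda>x. 0)) \<and>
     \<comment> \<open>Leibniz rule\<close>
     (\<forall>s1\<in>Gam. \<forall>s2\<in>Gam. \<forall>f\<in>A.
        br s1 (fsmul f s2) = sadd (fsmul f (br s1 s2)) (fsmul (rho s1 f) s2))"

definition form1 :: "('m \<Rightarrow> 'v \<Rightarrow> real) \<Rightarrow> ('m \<Rightarrow> 'v) \<Rightarrow> ('m \<Rightarrow> real)" where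
  "form1 \<eta> s = (\<lambda>x. \<eta> x (s x))"

definition form2 :: "('m \<Rightarrow> 'v \<Rightarrow> 'v \<Rightarrow> real) \<Rightarrow> ('m \<Rightarrow> 'v) \<Rightarrow> ('m \<Rightarrow> 'v) \<Rightarrow> ('m \<Rightarrow> real)" where
  "form2 g s1 s2 = (\<lambda>x. g x (s1 x) (s2 x))"

text \<open>d_E eta with the paper's convention (factor 1/2).\<close>
definition dE1 ::
  "(('m \<Rightarrow> 'v) \<Rightarrow> ('m \<Rightarrow> real) \<Rightarrow> ('m \<Rightarrow> real)) \<Rightarrow> (('m \<Rightarrow> 'v) \<Rightarrow> ('m \<Rightarrow> 'v) \<Rightarrow> ('m \<Rightarrow> 'v))
   \<Rightarrow> ('m \<Rightarrow> 'v \<Rightarrow> real) \<Rightarrow> ('m \<Rightarrow> 'v) \<Rightarrow> ('m \<Rightarrow> 'v) \<Rightarrow> ('m \<Rightarrow> real)" where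
  "dE1 rho br \<eta> s1 s2 =
     (\<lambda>x. (1/2) * (rho s1 (form1 \<eta> s2) x - rho s2 (form1 \<eta> s1) x - form1 \<eta> (br s1 s2) x))"

definition fundamental_form ::
  "('m \<Rightarrow> 'v \<Rightarrow> 'v) \<Rightarrow> ('m \<Rightarrow> 'v \<Rightarrow> 'v \<Rightarrow> real) \<Rightarrow> ('m \<Rightarrow> 'v) \<Rightarrow> ('m \<Rightarrow> 'v) \<Rightarrow> ('m \<Rightarrow> real)" where
  "fundamental_form F g s1 s2 = (\<lambda>x. g x (s1 x) (F x (s2 x)))"

definition almost_contact_riemannian ::
  "('m \<Rightarrow> real) set \<Rightarrow> nat \<Rightarrow> ('m \<Rightarrow> 'v::euclidean_space set) \<Rightarrow> ('m \<Rightarrow> 'v) set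
   \<Rightarrow> ('m \<Rightarrow> 'v \<Rightarrow> 'v) \<Rightarrow> ('m \<Rightarrow> 'v) \<Rightarrow> ('m \<Rightarrow> 'v \<Rightarrow> real) \<Rightarrow> ('m \<Rightarrow> 'v \<Rightarrow> 'v \<Rightarrow> real) \<Rightarrow> bool" where
  "almost_contact_riemannian A m E Gam F \<xi> \<eta> g \<longleftrightarrow>
     vector_bundle A (2*m+1) E Gam \<and>
     \<comment> \<open>smoothness of the tensor fields\<close>
     \<xi> \<in> Gam \<and>
     (\<forall>s\<in>Gam. (\<lambda>x. F x (s x)) \<in> Gam) \<and>
     (\<forall>s\<in>Gam. form1 \<eta> s \<in> A) \<and>
     (\<forall>s1\<in>Gam. \<forall>s2\<in>Gam. form2 g s1 s2 \<in> A) \<and>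
     \<comment> \<open>fibrewise linear algebra\<close>
     (\<forall>x. \<forall>v\<in>E x. \<forall>w\<in>E x. \<forall>c::real.
        F x (v + w) = F x v + F x w \<and> F x (c *\<^sub>R v) = c *\<^sub>R F x v \<and> F x v \<in> E x \<and>
        \<eta> x (v + w) = \<eta> x v + \<eta> x w \<and> \<eta> x (c *\<^sub>R v) = c * \<eta> x v) \<and>
     \<comment> \<open>g_E is a bundle metric: fibrewise symmetric, bilinear, positive definite\<close>
     (\<forall>x. \<forall>u\<in>E x. \<forall>v\<in>E x. \<forall>w\<in>E x. \<forall>c::real.
        g x u v = g x v u \<and> g x (u + v) w = g x u w + g x v w \<and> g x (c *\<^sub>R u) w = c * g x u w) \<and>
     (\<forall>x. \<forall>v\<in>E x. v \<noteq> 0 \<longrightarrow> g x v v > 0) \<and>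
     \<comment> \<open>structure equations\<close>
     (\<forall>x. \<forall>v\<in>E x. F x (F x v) = - v + \<eta> x v *\<^sub>R \<xi> x) \<and>
     (\<forall>x. \<eta> x (\<xi> x) = 1) \<and>
     (\<forall>x. \<forall>v\<in>E x. \<forall>w\<in>E x. g x (F x v) (F x w) = g x v w - \<eta> x v * \<eta> x w)"

text \<open>The value at a point x of (eta wedge (d_E eta)^m)(s_0,...,s_2m), up to the nonzero
  normalising constant of the wedge product convention (irrelevant for nonvanishing).\<close>
definition eta_wedge_deta_pow ::
  "(('m \<Rightarrow> 'v) \<Rightarrow> ('m \<Rightarrow> real) \<Rightarrow> ('m \<Rightarrow> real)) \<Rightarrow> (('m \<Rightarrow> 'v) \<Rightarrow> ('m \<Rightarrow> 'v) \<Rightarrow> ('m \<Rightarrow> 'v))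
   \<Rightarrow> ('m \<Rightarrow> 'v \<Rightarrow> real) \<Rightarrow> nat \<Rightarrow> (nat \<Rightarrow> ('m \<Rightarrow> 'v)) \<Rightarrow> 'm \<Rightarrow> real" where
  "eta_wedge_deta_pow rho br \<eta> m ss x =
     (\<Sum>p | p permutes {..2*m}. real_of_int (sign p) * form1 \<eta> (ss (p 0)) x *
        (\<Prod>i<m. dE1 rho br \<eta> (ss (p (2*i+1))) (ss (p (2*i+2))) x))"

definition contact_riemannian_lie_algebroid ::
  "('m \<Rightarrow> real) set \<Rightarrow> nat \<Rightarrow> ('m \<Rightarrow> 'v::euclidean_space set) \<Rightarrow> ('m \<Rightarrow> 'v) set
   \<Rightarrow> (('m \<Rightarrow> 'v) \<Rightarrow> ('m \<Rightarrow> real) \<Rightarrow> ('m \<Rightarrow> real)) \<Rightarrow> (('m \<Rightarrow> 'v) \<Rightarrow> ('m \<Rightarrow> 'v) \<Rightarrow> ('m \<Rightarrow> 'v))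
   \<Rightarrow> ('m \<Rightarrow> 'v \<Rightarrow> 'v) \<Rightarrow> ('m \<Rightarrow> 'v) \<Rightarrow> ('m \<Rightarrow> 'v \<Rightarrow> real) \<Rightarrow> ('m \<Rightarrow> 'v \<Rightarrow> 'v \<Rightarrow> real) \<Rightarrow> bool" where
  "contact_riemannian_lie_algebroid A m E Gam rho br F \<xi> \<eta> g \<longleftrightarrow>
     lie_algebroid A (2*m+1) E Gam rho br \<and>
     almost_contact_riemannian A m E Gam F \<xi> \<eta> g \<and>
     (\<forall>x. \<exists>ss. (\<forall>i\<le>2*m. ss i \<in> Gam) \<and> eta_wedge_deta_pow rho br \<eta> m ss x \<noteq> 0) \<and>
     (\<forall>s1\<in>Gam. \<forall>s2\<in>Gam. dE1 rho br \<eta> s1 s2 = fundamental_form F g s1 s2)"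

definition killing_section ::
  "('m \<Rightarrow> 'v) set \<Rightarrow> (('m \<Rightarrow> 'v) \<Rightarrow> ('m \<Rightarrow> real) \<Rightarrow> ('m \<Rightarrow> real)) \<Rightarrow> (('m \<Rightarrow> 'v) \<Rightarrow> ('m \<Rightarrow> 'v) \<Rightarrow> ('m \<Rightarrow> 'v))
   \<Rightarrow> ('m \<Rightarrow> 'v \<Rightarrow> 'v \<Rightarrow> real) \<Rightarrow> ('m \<Rightarrow> 'v) \<Rightarrow> bool" where
  "killing_section Gam rho br g \<xi> \<longleftrightarrow>
     (\<forall>s1\<in>Gam. \<forall>s2\<in>Gam. \<forall>x.
        rho \<xi> (form2 g s1 s2) x - form2 g (br \<xi> s1) s2 x - form2 g s1 (br \<xi> s2) x = 0)"

definition K_contact ::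
  "('m \<Rightarrow> real) set \<Rightarrow> nat \<Rightarrow> ('m \<Rightarrow> 'v::euclidean_space set) \<Rightarrow> ('m \<Rightarrow> 'v) set
   \<Rightarrow> (('m \<Rightarrow> 'v) \<Rightarrow> ('m \<Rightarrow> real) \<Rightarrow> ('m \<Rightarrow> real)) \<Rightarrow> (('m \<Rightarrow> 'v) \<Rightarrow> ('m \<Rightarrow> 'v) \<Rightarrow> ('m \<Rightarrow> 'v))
   \<Rightarrow> ('m \<Rightarrow> 'v \<Rightarrow> 'v) \<Rightarrow> ('m \<Rightarrow> 'v) \<Rightarrow> ('m \<Rightarrow> 'v \<Rightarrow> real) \<Rightarrow> ('m \<Rightarrow> 'v \<Rightarrow> 'v \<Rightarrow> real) \<Rightarrow> bool" where
  "K_contact A m E Gam rho br F \<xi> \<eta> g \<longleftrightarrow>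
     contact_riemannian_lie_algebroid A m E Gam rho br F \<xi> \<eta> g \<and> killing_section Gam rho br g \<xi>"

definition levi_civita ::
  "('m \<Rightarrow> real) set \<Rightarrow> ('m \<Rightarrow> 'v::real_vector) set
   \<Rightarrow> (('m \<Rightarrow> 'v) \<Rightarrow> ('m \<Rightarrow> real) \<Rightarrow> ('m \<Rightarrow> real)) \<Rightarrow> (('m \<Rightarrow> 'v) \<Rightarrow> ('m \<Rightarrow> 'v) \<Rightarrow> ('m \<Rightarrow> 'v))
   \<Rightarrow> ('m \<Rightarrow> 'v \<Rightarrow> 'v \<Rightarrow> real) \<Rightarrow> (('m \<Rightarrow> 'v) \<Rightarrow> ('m \<Rightarrow> 'v) \<Rightarrow> ('m \<Rightarrow> 'v)) \<Rightarrow> bool" where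
  "levi_civita A Gam rho br g nabla \<longleftrightarrow>
     (\<forall>s1\<in>Gam. \<forall>s2\<in>Gam. nabla s1 s2 \<in> Gam) \<and>
     (\<forall>s\<in>Gam. \<forall>s'\<in>Gam. \<forall>t\<in>Gam.
        nabla (sadd s t) s' = sadd (nabla s s') (nabla t s') \<and>
        nabla s (sadd s' t) = sadd (nabla s s') (nabla s t)) \<and>
     (\<forall>f\<in>A. \<forall>s\<in>Gam. \<forall>s'\<in>Gam.
        nabla (fsmul f s) s' = fsmul f (nabla s s') \<and>
        nabla s (fsmul f s') = sadd (fsmul f (nabla s s')) (fsmul (rho s f) s')) \<and>
     (\<forall>s1\<in>Gam. \<forall>s2\<in>Gam. (\<lambda>x. nabla s1 s2 x - nabla s2 s1 x) = br s1 s2) \<and>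
     (\<forall>s\<in>Gam. \<forall>s1\<in>Gam. \<forall>s2\<in>Gam.
        rho s (form2 g s1 s2) = (\<lambda>x. form2 g (nabla s s1) s2 x + form2 g s1 (nabla s s2) x))"

end

theory Submission
  imports Defs
begin

lemma pt_facts:
  fixes V :: "'v::real_vector set"
  assumes sub: "subspace V" and xi: "xi \<in> V"
  and lin: "\<forall>v\<in>V. \<forall>w\<in>V. \<forall>c::real. Fx (v+w) = Fx v + Fx w \<and> Fx (c*\<^sub>R v) = c*\<^sub>R Fx v \<and> Fx v \<in> V \<and> et (v+w) = et v + et w \<and> et (c*\<^sub>R v) = c * et v"
  and gl: "\<forall>u\<in>V. \<forall>v\<in>V. \<forall>w\<in>V. \<forall>c::real. gx u v = gx v u \<and> gx (u+v) w = gx u w + gx v w \<and> gx (c*\<^sub>R u) w = c * gx u w"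
  and F2: "\<forall>v\<in>V. Fx (Fx v) = -v + et v *\<^sub>R xi" and ex: "et xi = 1"
  and gF: "\<forall>v\<in>V. \<forall>w\<in>V. gx (Fx v) (Fx w) = gx v w - et v * et w"
  shows "Fx xi = 0" "\<forall>v\<in>V. et (Fx v) = 0" "\<forall>v\<in>V. gx v xi = et v"
    "\<forall>v\<in>V. \<forall>w\<in>V. gx (Fx v) w = - gx v (Fx w)"
proof -
  have FV: "\<And>v. v \<in> V \<Longrightarrow> Fx v \<in> V" using lin by blast
  have Fs: "\<And>v c. v \<in> V \<Longrightarrow> Fx (c*\<^sub>R v) = c*\<^sub>R Fx v" using lin by blast
  have Fa: "\<And>v w. v \<in> V \<Longrightarrow> w \<in> V \<Longrightarrow> Fx (v+w) = Fx v + Fx w" using lin by blast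
  have es: "\<And>v c. v \<in> V \<Longrightarrow> et (c*\<^sub>R v) = c * et v" using lin by blast
  have gs: "\<And>u w c. u \<in> V \<Longrightarrow> w \<in> V \<Longrightarrow> gx (c*\<^sub>R u) w = c * gx u w" using gl by blast
  have ga: "\<And>u v w. u \<in> V \<Longrightarrow> v \<in> V \<Longrightarrow> w \<in> V \<Longrightarrow> gx (u+v) w = gx u w + gx v w" using gl by blast
  have gsym: "\<And>u w. u \<in> V \<Longrightarrow> w \<in> V \<Longrightarrow> gx u w = gx w u" using gl by blast
  have e0: "et 0 = 0" using es[OF xi, of 0] by simp
  have F0: "Fx 0 = 0" using Fs[OF xi, of 0] by simp
  have g0: "\<And>w. w \<in> V \<Longrightarrow> gx 0 w = 0" using gs[OF xi, of _ 0] by simp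
  have xi0: "xi \<noteq> 0" using ex e0 by auto
  have Fneg: "\<And>v. v \<in> V \<Longrightarrow> Fx (-v) = - Fx v" using Fs[of _ "-1"] by simp
  have FFF: "\<And>v. v \<in> V \<Longrightarrow> Fx (Fx (Fx v)) = - Fx v + et v *\<^sub>R Fx xi"
  proof -
    fix v assume v: "v \<in> V"
    have "Fx (Fx (Fx v)) = Fx (-v + et v *\<^sub>R xi)" using F2 v by simp
    also have "\<dots> = Fx (-v) + et v *\<^sub>R Fx xi"
      using Fa[of "-v" "et v *\<^sub>R xi"] Fs[OF xi] v xi sub by (simp add: subspace_neg subspace_scale)
    also have "\<dots> = - Fx v + et v *\<^sub>R Fx xi" using Fneg v by simp
    finally show "Fx (Fx (Fx v)) = - Fx v + et v *\<^sub>R Fx xi" .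
  qed
  define a where "a = Fx xi"
  have aV: "a \<in> V" using FV xi a_def by simp
  have Fa0: "Fx a = 0" using F2 xi ex a_def by simp
  have "Fx (Fx a) = - a + et a *\<^sub>R xi" using F2 aV by simp
  hence aeq: "a = et a *\<^sub>R xi" using Fa0 F0 by (simp add: algebra_simps)
  have "Fx a = et a *\<^sub>R a" using Fs[OF xi, of "et a"] aeq a_def by metis
  hence "(et a * et a) *\<^sub>R xi = 0" using Fa0 aeq by (metis scaleR_scaleR)
  hence "et a = 0" using xi0 by simp
  hence a0: "a = 0" using aeq by simp
  thus Fxi: "Fx xi = 0" using a_def by simp
  have eF: "\<And>v. v \<in> V \<Longrightarrow> et (Fx v) = 0"
  proof -
    fix v assume v: "v \<in> V"
    have "Fx (Fx (Fx v)) = - Fx v + et (Fx v) *\<^sub>R xi" using F2 FV v by blast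
    hence "et (Fx v) *\<^sub>R xi = 0" using FFF[OF v] Fxi by simp
    thus "et (Fx v) = 0" using xi0 by simp
  qed
  thus "\<forall>v\<in>V. et (Fx v) = 0" by blast
  have gxi: "\<forall>v\<in>V. gx v xi = et v"
  proof
    fix v assume v: "v \<in> V"
    have "gx (Fx v) (Fx xi) = 0" using Fxi gsym[OF FV[OF v] subspace_0[OF sub]] g0 FV v by simp
    thus "gx v xi = et v" using gF v xi ex by force
  qed
  thus "\<forall>v\<in>V. gx v xi = et v" .
  show "\<forall>v\<in>V. \<forall>w\<in>V. gx (Fx v) w = - gx v (Fx w)"
  proof (intro ballI)
    fix v w assume v: "v \<in> V" and w: "w \<in> V"
    have "gx (Fx (Fx v)) (Fx w) = gx (Fx v) w" using gF FV v w eF by simp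
    moreover have "gx (Fx (Fx v)) (Fx w) = gx (-v) (Fx w) + gx (et v *\<^sub>R xi) (Fx w)"
      using F2 v ga[of "-v" "et v *\<^sub>R xi" "Fx w"] sub xi FV w by (simp add: subspace_neg subspace_scale)
    moreover have "gx (-v) (Fx w) = - gx v (Fx w)" using gs[OF v FV[OF w], of "-1"] by simp
    moreover have "gx (et v *\<^sub>R xi) (Fx w) = 0"
      using gs[OF xi FV[OF w]] gsym[OF xi FV[OF w]] gxi FV[OF w] eF[OF w] by simp
    ultimately show "gx (Fx v) w = - gx v (Fx w)" by simp
  qed
qed

theorem proposition4p6:
  fixes A :: "('m \<Rightarrow> real) set" and E :: "'m \<Rightarrow> 'v::euclidean_space set"
    and Gam :: "('m \<Rightarrow> 'v) set"
    and rho :: "('m \<Rightarrow> 'v) \<Rightarrow> ('m \<Rightarrow> real) \<Rightarrow> ('m \<Rightarrow> real)"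
    and br :: "('m \<Rightarrow> 'v) \<Rightarrow> ('m \<Rightarrow> 'v) \<Rightarrow> ('m \<Rightarrow> 'v)"
    and F :: "'m \<Rightarrow> 'v \<Rightarrow> 'v" and \<xi> :: "'m \<Rightarrow> 'v" and \<eta> :: "'m \<Rightarrow> 'v \<Rightarrow> real"
    and g :: "'m \<Rightarrow> 'v \<Rightarrow> 'v \<Rightarrow> real"
    and nabla :: "('m \<Rightarrow> 'v) \<Rightarrow> ('m \<Rightarrow> 'v) \<Rightarrow> ('m \<Rightarrow> 'v)"
    and m :: nat
  assumes "contact_riemannian_lie_algebroid A m E Gam rho br F \<xi> \<eta> g"
    and "levi_civita A Gam rho br g nabla"
  shows "K_contact A m E Gam rho br F \<xi> \<eta> g \<longleftrightarrow>
         (\<forall>s\<in>Gam. nabla s \<xi> = (\<lambda>x. - F x (s x)))"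
proof -
  note C = assms(1)[unfolded contact_riemannian_lie_algebroid_def]
  have ac: "almost_contact_riemannian A m E Gam F \<xi> \<eta> g" using C by blast
  note AC = ac[unfolded almost_contact_riemannian_def vector_bundle_def]
  note LC = assms(2)[unfolded levi_civita_def]
  have sub: "\<And>x. subspace (E x)" using AC by meson
  have secE: "\<And>s x. s \<in> Gam \<Longrightarrow> s x \<in> E x" using AC by meson
  have surjE: "\<And>x v. v \<in> E x \<Longrightarrow> \<exists>s\<in>Gam. s x = v" using AC by meson
  have xiG: "\<xi> \<in> Gam" using AC by meson
  have lin: "\<And>x. \<forall>v\<in>E x. \<forall>w\<in>E x. \<forall>c::real. F x (v+w) = F x v + F x w \<and> F x (c*\<^sub>R v) = c*\<^sub>R F x v \<and> F x v \<in> E x \<and> \<eta> x (v+w) = \<eta> x v + \<eta> x w \<and> \<eta> x (c*\<^sub>R v) = c * \<eta> x v"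
    using AC by meson
  have gl: "\<And>x. \<forall>u\<in>E x. \<forall>v\<in>E x. \<forall>w\<in>E x. \<forall>c::real. g x u v = g x v u \<and> g x (u+v) w = g x u w + g x v w \<and> g x (c*\<^sub>R u) w = c * g x u w"
    using AC by meson
  have pos: "\<And>x v. v \<in> E x \<Longrightarrow> v \<noteq> 0 \<Longrightarrow> g x v v > 0" using AC by meson
  have F2: "\<And>x. \<forall>v\<in>E x. F x (F x v) = -v + \<eta> x v *\<^sub>R \<xi> x" using AC by meson
  have ex: "\<And>x. \<eta> x (\<xi> x) = 1" using AC by meson
  have gF: "\<And>x. \<forall>v\<in>E x. \<forall>w\<in>E x. g x (F x v) (F x w) = g x v w - \<eta> x v * \<eta> x w" using AC by meson
  note P = pt_facts[OF sub secE[OF xiG] lin gl F2 ex gF]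
  have gxi: "\<And>x v. v \<in> E x \<Longrightarrow> g x v (\<xi> x) = \<eta> x v" using P(3) by blast
  have skew: "\<And>x v w. v \<in> E x \<Longrightarrow> w \<in> E x \<Longrightarrow> g x (F x v) w = - g x v (F x w)" using P(4) by blast
  have FE: "\<And>x v. v \<in> E x \<Longrightarrow> F x v \<in> E x" using lin by blast
  have gsym: "\<And>x u w. u \<in> E x \<Longrightarrow> w \<in> E x \<Longrightarrow> g x u w = g x w u" using gl by blast
  have ga: "\<And>x u v w. u \<in> E x \<Longrightarrow> v \<in> E x \<Longrightarrow> w \<in> E x \<Longrightarrow> g x (u+v) w = g x u w + g x v w" using gl by blast
  have gs: "\<And>x u w c. u \<in> E x \<Longrightarrow> w \<in> E x \<Longrightarrow> g x (c*\<^sub>R u) w = c * g x u w" using gl by blast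
  have gdiff: "\<And>x u v w. u \<in> E x \<Longrightarrow> v \<in> E x \<Longrightarrow> w \<in> E x \<Longrightarrow> g x (u-v) w = g x u w - g x v w"
  proof -
    fix x u v w assume u: "u \<in> E x" and v: "v \<in> E x" and w: "w \<in> E x"
    have "u - v \<in> E x" using sub u v by (simp add: subspace_diff)
    hence "g x (u - v + v) w = g x (u-v) w + g x v w" using ga v w by blast
    thus "g x (u-v) w = g x u w - g x v w" by simp
  qed
  have gdiff2: "\<And>x u v w. u \<in> E x \<Longrightarrow> v \<in> E x \<Longrightarrow> w \<in> E x \<Longrightarrow> g x w (u-v) = g x w u - g x w v"
    using gdiff gsym sub by (metis subspace_diff)
  have gneg: "\<And>x u w. u \<in> E x \<Longrightarrow> w \<in> E x \<Longrightarrow> g x (-u) w = - g x u w"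
    using gs[of _ _ _ "-1"] by simp
  have gneg2: "\<And>x u w. u \<in> E x \<Longrightarrow> w \<in> E x \<Longrightarrow> g x w (-u) = - g x w u"
    using gneg gsym sub by (metis subspace_neg)
  have nG: "\<And>s1 s2. s1 \<in> Gam \<Longrightarrow> s2 \<in> Gam \<Longrightarrow> nabla s1 s2 \<in> Gam" using LC by blast
  have nE: "\<And>s1 s2 x. s1 \<in> Gam \<Longrightarrow> s2 \<in> Gam \<Longrightarrow> nabla s1 s2 x \<in> E x" using nG secE by blast
  have tor: "\<And>s1 s2 x. s1 \<in> Gam \<Longrightarrow> s2 \<in> Gam \<Longrightarrow> br s1 s2 x = nabla s1 s2 x - nabla s2 s1 x"
  proof -
    fix s1 s2 x assume "s1 \<in> Gam" "s2 \<in> Gam"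
    hence "(\<lambda>x. nabla s1 s2 x - nabla s2 s1 x) = br s1 s2" using LC by blast
    thus "br s1 s2 x = nabla s1 s2 x - nabla s2 s1 x" by (metis)
  qed
  have met: "\<And>s s1 s2 x. s \<in> Gam \<Longrightarrow> s1 \<in> Gam \<Longrightarrow> s2 \<in> Gam \<Longrightarrow>
      rho s (form2 g s1 s2) x = g x (nabla s s1 x) (s2 x) + g x (s1 x) (nabla s s2 x)"
  proof -
    fix s s1 s2 x assume "s \<in> Gam" "s1 \<in> Gam" "s2 \<in> Gam"
    hence "rho s (form2 g s1 s2) = (\<lambda>x. form2 g (nabla s s1) s2 x + form2 g s1 (nabla s s2) x)" using LC by blast
    thus "rho s (form2 g s1 s2) x = g x (nabla s s1 x) (s2 x) + g x (s1 x) (nabla s s2 x)"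
      by (simp add: form2_def)
  qed
  have dE: "\<And>s1 s2. s1 \<in> Gam \<Longrightarrow> s2 \<in> Gam \<Longrightarrow> dE1 rho br \<eta> s1 s2 = fundamental_form F g s1 s2"
    using C by blast
  have key: "\<And>s1 s2 x. s1 \<in> Gam \<Longrightarrow> s2 \<in> Gam \<Longrightarrow>
     2 * g x (s1 x) (F x (s2 x)) = g x (s2 x) (nabla s1 \<xi> x) - g x (s1 x) (nabla s2 \<xi> x)"
  proof -
    fix s1 s2 x assume s1: "s1 \<in> Gam" and s2: "s2 \<in> Gam"
    have f1: "\<And>s. s \<in> Gam \<Longrightarrow> form1 \<eta> s = form2 g s \<xi>"
      by (rule ext) (simp add: form1_def form2_def gxi secE)
    have "dE1 rho br \<eta> s1 s2 x = fundamental_form F g s1 s2 x" using dE s1 s2 by simp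
    hence "(1/2) * (rho s1 (form2 g s2 \<xi>) x - rho s2 (form2 g s1 \<xi>) x - \<eta> x (br s1 s2 x))
        = g x (s1 x) (F x (s2 x))"
      by (simp add: dE1_def fundamental_form_def f1[OF s1] f1[OF s2] form1_def[of \<eta> "br s1 s2"])
    moreover have "\<eta> x (br s1 s2 x) = g x (nabla s1 s2 x) (\<xi> x) - g x (nabla s2 s1 x) (\<xi> x)"
      using tor[OF s1 s2, of x] gxi gdiff nE s1 s2 secE xiG sub by (metis subspace_diff)
    moreover note met[OF s1 s2 xiG, of x] met[OF s2 s1 xiG, of x]
    ultimately show "2 * g x (s1 x) (F x (s2 x)) = g x (s2 x) (nabla s1 \<xi> x) - g x (s1 x) (nabla s2 \<xi> x)"
      by simp
  qed
  have kill: "\<And>s1 s2 x. s1 \<in> Gam \<Longrightarrow> s2 \<in> Gam \<Longrightarrow>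
     rho \<xi> (form2 g s1 s2) x - form2 g (br \<xi> s1) s2 x - form2 g s1 (br \<xi> s2) x
     = g x (nabla s1 \<xi> x) (s2 x) + g x (s1 x) (nabla s2 \<xi> x)"
  proof -
    fix s1 s2 x assume s1: "s1 \<in> Gam" and s2: "s2 \<in> Gam"
    have "form2 g (br \<xi> s1) s2 x = g x (nabla \<xi> s1 x) (s2 x) - g x (nabla s1 \<xi> x) (s2 x)"
      using tor[OF xiG s1, of x] gdiff nE s1 s2 xiG secE by (simp add: form2_def)
    moreover have "form2 g s1 (br \<xi> s2) x = g x (s1 x) (nabla \<xi> s2 x) - g x (s1 x) (nabla s2 \<xi> x)"
      using tor[OF xiG s2, of x] gdiff2 nE s1 s2 xiG secE by (simp add: form2_def)
    ultimately show "rho \<xi> (form2 g s1 s2) x - form2 g (br \<xi> s1) s2 x - form2 g s1 (br \<xi> s2) x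
     = g x (nabla s1 \<xi> x) (s2 x) + g x (s1 x) (nabla s2 \<xi> x)"
      using met[OF xiG s1 s2, of x] by simp
  qed
  show ?thesis
  proof
    assume K: "K_contact A m E Gam rho br F \<xi> \<eta> g"
    hence ks: "\<And>s1 s2 x. s1 \<in> Gam \<Longrightarrow> s2 \<in> Gam \<Longrightarrow> g x (nabla s1 \<xi> x) (s2 x) + g x (s1 x) (nabla s2 \<xi> x) = 0"
      using kill unfolding K_contact_def killing_section_def by metis
    show "\<forall>s\<in>Gam. nabla s \<xi> = (\<lambda>x. - F x (s x))"
    proof (intro ballI ext)
      fix s x assume s: "s \<in> Gam"
      define u where "u = nabla s \<xi> x + F x (s x)"
      have uE: "u \<in> E x" unfolding u_def using sub nE[OF s xiG] FE secE[OF s] by (simp add: subspace_add)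
      obtain t where t: "t \<in> Gam" "t x = u" using surjE[OF uE] by blast
      have "2 * g x (s x) (F x (t x)) = g x (t x) (nabla s \<xi> x) - g x (s x) (nabla t \<xi> x)"
        using key[OF s t(1)] .
      moreover have "g x (nabla s \<xi> x) (t x) + g x (s x) (nabla t \<xi> x) = 0" using ks[OF s t(1)] .
      moreover have "g x (t x) (nabla s \<xi> x) = g x (nabla s \<xi> x) (t x)" using gsym nE[OF s xiG] secE[OF t(1)] by blast
      moreover have "g x (s x) (F x (t x)) = - g x (F x (s x)) (t x)" using skew secE[OF s] secE[OF t(1)] by simp
      ultimately have "g x (nabla s \<xi> x) (t x) + g x (F x (s x)) (t x) = 0" by simp
      hence "g x u u = 0" unfolding u_def using t(2) ga nE[OF s xiG] FE secE[OF s] uE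
        by (metis u_def)
      hence "u = 0" using pos[OF uE] by fastforce
      thus "nabla s \<xi> x = - F x (s x)" unfolding u_def by (simp add: eq_neg_iff_add_eq_0)
    qed
  next
    assume N: "\<forall>s\<in>Gam. nabla s \<xi> = (\<lambda>x. - F x (s x))"
    have "killing_section Gam rho br g \<xi>"
      unfolding killing_section_def
    proof (intro ballI allI)
      fix s1 s2 x assume s1: "s1 \<in> Gam" and s2: "s2 \<in> Gam"
      have "g x (nabla s1 \<xi> x) (s2 x) + g x (s1 x) (nabla s2 \<xi> x)
          = - g x (F x (s1 x)) (s2 x) - g x (s1 x) (F x (s2 x))"
        using N s1 s2 gneg gneg2 FE secE by simp
      also have "\<dots> = 0" using skew secE s1 s2 by simp
      finally show "rho \<xi> (form2 g s1 s2) x - form2 g (br \<xi> s1) s2 x - form2 g s1 (br \<xi> s2) x = 0"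
        using kill[OF s1 s2, of x] by simp
    qed
    thus "K_contact A m E Gam rho br F \<xi> \<eta> g" using assms(1) unfolding K_contact_def by simp
  qed
qed

end
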